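(* Let $A\in\mathbb{R}^{n\times n}$ be asymptotically stable and $B\in\mathbb{R}^{n\times q}$. For $m\ge1$ let $V_m=[\mathcal V_1,\ldots,\mathcal V_m]\in\mathbb{R}^{n\times 2mq}$, $\mathcal V_i\in\mathbb{R}^{n\times 2q}$, have orthonormal columns spanning the block extended Krylov subspace $\mathbf{EK}_m^\square(A,B)=\operatorname{range}([B,A^{-1}B,AB,A^{-2}B,\ldots,A^{m-1}B,A^{-m}B])$ (nested in $m$), satisfying the Arnoldi relation $$AV_m=V_mT_m+\mathcal V_{m+1}E_{m+1}^{\mathsf T}\underline{T}_m,$$ where $\underline{T}_m=V_{m+1}^{\mathsf T}AV_m\in\mathbb{R}^{2(m+1)q\times 2mq}$, $T_m=V_m^{\mathsf T}AV_m$ is its leading $2mq\times2mq$ block, and $E_{m+1}=e_{m+1}\otimes I_{2q}$. Let $p_j\in\mathbb{C}$ with $\operatorname{Re}(p_j)<0$, let $m_{j-1}\le m_j$ be integers, and let $W_{j-1}=V_{m_{j-1}}\Upsilon_{j-1}$ for some $\Upsilon_{j-1}\in\mathbb{C}^{2m_{j-1}q\times q}$. Seek $S_j=V_{m_j}Y_{m_j}$, $Y_{m_j}\in\mathbb{C}^{2m_jq\times q}$, approximating the solution of $(A+p_jI)S_j=W_{j-1}$, with residual $R_{m_j}=(A+p_jI)S_j-W_{j-1}$. Then: (i) If the Galerkin condition $V_{m_j}^{\mathsf T}R_{m_j}=0$ is imposed, $Y_{m_j}$ is the solution of $$(T_{m_j}+p_jI_{2m_jq})Y_{m_j}=[\Upsilon_{j-1};O_{2(m_j-m_{j-1})q\times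 q}],$$ and $\|R_{m_j}\|_F=\|E_{m_j+1}^{\mathsf T}\underline{T}_{m_j}Y_{m_j}\|_F$. (ii) If a minimal residual condition is imposed, i.e. $Y_{m_j}$ minimizes $\|R_{m_j}\|_F$ over $Y\in\mathbb{C}^{2m_jq\times q}$, then $$Y_{m_j}=\arg\min_{Y\in\mathbb{C}^{2m_jq\times q}}\big\|(\underline{T}_{m_j}+p_j[I_{2m_jq};O_{2q\times2m_jq}])Y-[\Upsilon_{j-1};O_{2(m_j-m_{j-1}+1)q\times q}]\big\|_F,$$ and $\|R_{m_j}\|_F=\|Q_2^{*}[\Upsilon_{j-1};O_{2(m_j-m_{j-1}+1)q\times q}]\|_F$, where the columns of $Q_2$ form an orthonormal basis of the orthogonal complement (in $\mathbb{C}^{2(m_j+1)q}$) of the range of $\underline{T}_{m_j}+p_j[I_{2m_jq};O_{2q\times2m_jq}]$.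
   Context: $[M;N]$ denotes vertical concatenation of $M$ on top of $N$; $O_{a\times b}$ is the $a\times b$ zero matrix; $e_i$ is the $i$-th canonical basis vector; $\otimes$ is the Kronecker product; $\|\cdot\|_F$ is the Frobenius norm; $Q_2^*$ is the conjugate transpose. The matrix $V_{m_{j-1}}$ consists of the first $2m_{j-1}q$ columns of $V_{m_j}$. *)

theory Defs
  imports "Jordan_Normal_Form.Char_Poly"
begin

definition range_mat :: "'a::comm_semiring_1 mat \<Rightarrow> 'a vec set" where
  "range_mat M = {M *\<^sub>v x | x. x \<in> carrier_vec (dim_col M)}"

definition span_vecs :: "nat \<Rightarrow> real vec set \<Rightarrow> real vec set" where
  "span_vecs n G = {vec n (\<lambda>r. \<Sum>i<N. c i * (g i $ r)) | (N::nat) (c::nat \<Rightarrow> real) (g::nat \<Rightarrow> real vec). \<forall>i<N. g i \<in> G}"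

(* Columns of B, A^k B (0 \<le> k < m) and A^{-k} B (1 \<le> k \<le> m); the vector A^{-k} b is
   the (unique, A being invertible) x with A^k x = b. *)
definition ext_krylov_gens :: "real mat \<Rightarrow> real mat \<Rightarrow> nat \<Rightarrow> real vec set" where
  "ext_krylov_gens A B m =
     {(A ^\<^sub>m k) *\<^sub>v col B j | k j. k < m \<and> j < dim_col B} \<union>
     {x. x \<in> carrier_vec (dim_row A) \<and>
         (\<exists>k j. 1 \<le> k \<and> k \<le> m \<and> j < dim_col B \<and> (A ^\<^sub>m k) *\<^sub>v x = col B j)}"

definition ext_krylov :: "real mat \<Rightarrow> real mat \<Rightarrow> nat \<Rightarrow> real vec set" where
  "ext_krylov A B m = span_vecs (dim_row A) (ext_krylov_gens A B m)"

definition asympt_stable :: "real mat \<Rightarrow> bool" where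
  "asympt_stable A \<longleftrightarrow> A \<in> carrier_mat (dim_row A) (dim_row A) \<and>
     (\<forall>ev. eigenvalue (map_mat complex_of_real A) ev \<longrightarrow> Re ev < 0)"

definition col_block :: "'a mat \<Rightarrow> nat \<Rightarrow> nat \<Rightarrow> 'a mat" where
  "col_block M a b = mat (dim_row M) (b - a) (\<lambda>(i,j). M $$ (i, a + j))"

definition row_block :: "'a mat \<Rightarrow> nat \<Rightarrow> nat \<Rightarrow> 'a mat" where
  "row_block M a b = mat (b - a) (dim_col M) (\<lambda>(i,j). M $$ (a + i, j))"

(* [U; O] with total number of rows r *)
definition pad_rows :: "'a::zero mat \<Rightarrow> nat \<Rightarrow> 'a mat" where
  "pad_rows U r = mat r (dim_col U) (\<lambda>(i,j). if i < dim_row U then U $$ (i,j) else 0)"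

definition ctrans :: "complex mat \<Rightarrow> complex mat" where
  "ctrans M = transpose_mat (map_mat cnj M)"

definition cmat :: "real mat \<Rightarrow> complex mat" where
  "cmat M = map_mat complex_of_real M"

definition frob_norm :: "complex mat \<Rightarrow> real" where
  "frob_norm M = sqrt (\<Sum>i<dim_row M. \<Sum>j<dim_col M. (cmod (M $$ (i,j)))\<^sup>2)"

definition orth_compl :: "nat \<Rightarrow> complex vec set \<Rightarrow> complex vec set" where
  "orth_compl N S = {x \<in> carrier_vec N. \<forall>y\<in>S. (\<Sum>i<N. cnj (y $ i) * x $ i) = 0}"

end

theory Submission
  imports Defs
begin

declare index_mult_mat(1)[simp del]


lemma mult_entry:
  assumes "A \<in> carrier_mat a b" "B \<in> carrier_mat b c" "i < a" "j < c"
  shows "(A * B) $$ (i,j) = (\<Sum>l<b. A $$ (i,l) * B $$ (l,j))"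
  using assms by (auto simp: index_mult_mat(1) scalar_prod_def lessThan_atLeast0 intro!: sum.cong)

lemma col_block_carrier[simp]: "dim_row (col_block M a b) = dim_row M" "dim_col (col_block M a b) = b - a"
  by (auto simp: col_block_def)
lemma row_block_carrier[simp]: "dim_row (row_block M a b) = b - a" "dim_col (row_block M a b) = dim_col M"
  by (auto simp: row_block_def)
lemma pad_rows_carrier[simp]: "dim_row (pad_rows U r) = r" "dim_col (pad_rows U r) = dim_col U"
  by (auto simp: pad_rows_def)
lemma cmat_dims[simp]: "dim_row (cmat M) = dim_row M" "dim_col (cmat M) = dim_col M"
  by (auto simp: cmat_def)
lemma ctrans_dims[simp]: "dim_row (ctrans M) = dim_col M" "dim_col (ctrans M) = dim_row M"
  by (auto simp: ctrans_def)

lemma col_block_index[simp]: "i < dim_row M \<Longrightarrow> j < b - a \<Longrightarrow> col_block M a b $$ (i,j) = M $$ (i, a+j)"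
  by (auto simp: col_block_def)
lemma row_block_index[simp]: "i < b - a \<Longrightarrow> j < dim_col M \<Longrightarrow> row_block M a b $$ (i,j) = M $$ (a+i, j)"
  by (auto simp: row_block_def)
lemma pad_rows_index[simp]: "i < r \<Longrightarrow> j < dim_col U \<Longrightarrow> pad_rows U r $$ (i,j) = (if i < dim_row U then U $$ (i,j) else 0)"
  by (auto simp: pad_rows_def)
lemma cmat_index[simp]: "i < dim_row M \<Longrightarrow> j < dim_col M \<Longrightarrow> cmat M $$ (i,j) = complex_of_real (M $$ (i,j))"
  by (auto simp: cmat_def)
lemma ctrans_index[simp]: "i < dim_col M \<Longrightarrow> j < dim_row M \<Longrightarrow> ctrans M $$ (i,j) = cnj (M $$ (j,i))"
  by (auto simp: ctrans_def)

lemma cmat_carrier[simp]: "M \<in> carrier_mat r k \<Longrightarrow> cmat M \<in> carrier_mat r k"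
  by (intro carrier_matI) auto
lemma ctrans_carrier[simp]: "M \<in> carrier_mat r k \<Longrightarrow> ctrans M \<in> carrier_mat k r"
  by (intro carrier_matI) auto
lemma ctrans_mult_carrier[simp]: "M \<in> carrier_mat a b \<Longrightarrow> D \<in> carrier_mat a c \<Longrightarrow> ctrans M * D \<in> carrier_mat b c"
  by (rule mult_carrier_mat[OF ctrans_carrier])
lemma col_block_carrier0[simp]: "M \<in> carrier_mat r k \<Longrightarrow> col_block M 0 c \<in> carrier_mat r c"
  by (intro carrier_matI) auto
lemma col_block_carrier_mat[simp]: "M \<in> carrier_mat r k \<Longrightarrow> col_block M a b \<in> carrier_mat r (b - a)"
  by (intro carrier_matI) auto
lemma row_block_carrier0[simp]: "M \<in> carrier_mat r k \<Longrightarrow> row_block M 0 c \<in> carrier_mat c k"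
  by (intro carrier_matI) auto
lemma row_block_carrier_mat[simp]: "M \<in> carrier_mat r k \<Longrightarrow> row_block M a b \<in> carrier_mat (b - a) k"
  by (intro carrier_matI) auto
lemma pad_rows_carrier_mat[simp]: "U \<in> carrier_mat c s \<Longrightarrow> pad_rows U r \<in> carrier_mat r s"
  by (intro carrier_matI) auto

lemma col_block_col_block: "c \<le> b \<Longrightarrow> col_block (col_block M 0 b) 0 c = col_block M 0 c"
  by (auto intro!: eq_matI)

lemma col_block_pad:
  fixes M :: "'a::semiring_0 mat"
  assumes M: "M \<in> carrier_mat r k" and U: "U \<in> carrier_mat c s" and ck: "c \<le> k"
  shows "col_block M 0 c * U = M * pad_rows U k"
proof (rule eq_matI)
  fix i j assume i: "i < dim_row (M * pad_rows U k)" and j: "j < dim_col (M * pad_rows U k)"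
  have "(col_block M 0 c * U) $$ (i,j) = (\<Sum>l<c. M $$ (i,l) * U $$ (l,j))"
    using assms i j by (subst mult_entry[of _ r c _ s]) (auto intro!: carrier_matI)
  also have "\<dots> = (\<Sum>l<k. M $$ (i,l) * (if l < c then U $$ (l,j) else 0))"
  proof -
    let ?g = "\<lambda>l. M $$ (i,l) * (if l < c then U $$ (l,j) else 0)"
    have "(\<Sum>l\<in>{0..<k}. ?g l) = (\<Sum>l\<in>{0..<c}. ?g l) + (\<Sum>l\<in>{c..<k}. ?g l)"
      by (rule sum.atLeastLessThan_concat[symmetric]) (use ck in auto)
    also have "(\<Sum>l\<in>{c..<k}. ?g l) = 0" by (intro sum.neutral) auto
    also have "(\<Sum>l\<in>{0..<c}. ?g l) = (\<Sum>l\<in>{0..<c}. M $$ (i,l) * U $$ (l,j))"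
      by (intro sum.cong refl) auto
    finally show ?thesis by (simp only: atLeast0LessThan add_0_right)
  qed
  also have "\<dots> = (M * pad_rows U k) $$ (i,j)"
    using assms i j by (subst mult_entry[of _ r k _ s]) (auto intro!: sum.cong carrier_matI)
  finally show "(col_block M 0 c * U) $$ (i,j) = (M * pad_rows U k) $$ (i,j)" .
qed (use assms in auto)

lemma transpose_col_block:
  assumes "b \<le> dim_col M" shows "transpose_mat (col_block M a b) = row_block (transpose_mat M) a b"
  using assms by (auto intro!: eq_matI)

lemma row_block_mult:
  fixes X :: "'a::semiring_0 mat"
  assumes X: "X \<in> carrier_mat r k" and Y: "Y \<in> carrier_mat k s" and b: "b \<le> r"
  shows "row_block (X * Y) a b = row_block X a b * Y"
proof (rule eq_matI)
  fix i j assume i: "i < dim_row (row_block X a b * Y)" and j: "j < dim_col (row_block X a b * Y)"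
  have ij: "i < b - a" "j < s" using i j assms by auto
  show "row_block (X * Y) a b $$ (i,j) = (row_block X a b * Y) $$ (i,j)"
  proof -
    have "row_block (X * Y) a b $$ (i,j) = (X * Y) $$ (a+i, j)" using assms ij by simp
    also have "\<dots> = (\<Sum>l<k. X $$ (a+i,l) * Y $$ (l,j))" using assms ij by (intro mult_entry) auto
    also have "\<dots> = (row_block X a b * Y) $$ (i,j)" using assms ij
      by (subst mult_entry[of _ "b-a" k _ s]) (auto intro!: carrier_matI)
    finally show ?thesis .
  qed
qed (use assms in auto)

lemma cmat_mult:
  assumes X: "X \<in> carrier_mat r k" and Y: "Y \<in> carrier_mat k s"
  shows "cmat (X * Y) = cmat X * cmat Y"
proof (rule eq_matI)
  fix i j assume i: "i < dim_row (cmat X * cmat Y)" and j: "j < dim_col (cmat X * cmat Y)"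
  have ij: "i < r" "j < s" using i j assms by auto
  have "cmat (X * Y) $$ (i,j) = complex_of_real ((X * Y) $$ (i,j))" using X Y ij by simp
  also have "\<dots> = complex_of_real (\<Sum>l<k. X $$ (i,l) * Y $$ (l,j))"
    by (simp only: mult_entry[OF X Y ij])
  also have "\<dots> = (\<Sum>l<k. cmat X $$ (i,l) * cmat Y $$ (l,j))"
    using X Y ij by (simp add: of_real_sum)
  also have "\<dots> = (cmat X * cmat Y) $$ (i,j)"
    by (rule mult_entry[OF cmat_carrier[OF X] cmat_carrier[OF Y] ij, symmetric])
  finally show "cmat (X * Y) $$ (i,j) = (cmat X * cmat Y) $$ (i,j)" .
qed (use assms in auto)

lemma ctrans_cmat: "ctrans (cmat X) = cmat (transpose_mat X)"
  by (auto intro!: eq_matI)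

lemma cmat_row_block: "b \<le> dim_row X \<Longrightarrow> cmat (row_block X a b) = row_block (cmat X) a b"
  by (auto intro!: eq_matI)
lemma cmat_col_block: "b \<le> dim_col X \<Longrightarrow> cmat (col_block X a b) = col_block (cmat X) a b"
  by (auto intro!: eq_matI)
lemma cmat_one: "cmat (1\<^sub>m k) = 1\<^sub>m k"
  by (auto intro!: eq_matI)

lemma block_decomp:
  fixes M :: "'a::semiring_0 mat"
  assumes M: "M \<in> carrier_mat r K" and X: "X \<in> carrier_mat K s" and NK: "N \<le> K"
  shows "M * X = col_block M 0 N * row_block X 0 N + col_block M N K * row_block X N K"
proof (rule eq_matI)
  fix i j assume i: "i < dim_row (col_block M 0 N * row_block X 0 N + col_block M N K * row_block X N K)"
    and j: "j < dim_col (col_block M 0 N * row_block X 0 N + col_block M N K * row_block X N K)"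
  have ij: "i < r" "j < s" using i j assms by auto
  have "(M * X) $$ (i,j) = (\<Sum>l<K. M $$ (i,l) * X $$ (l,j))"
    using assms ij by (subst mult_entry[of _ r K _ s]) auto
  also have "\<dots> = (\<Sum>l<N. M $$ (i,l) * X $$ (l,j)) + (\<Sum>l\<in>{N..<K}. M $$ (i,l) * X $$ (l,j))"
  proof -
    have "(\<Sum>l\<in>{0..<K}. M $$ (i,l) * X $$ (l,j)) = (\<Sum>l\<in>{0..<N}. M $$ (i,l) * X $$ (l,j)) + (\<Sum>l\<in>{N..<K}. M $$ (i,l) * X $$ (l,j))"
      by (rule sum.atLeastLessThan_concat[symmetric]) (use NK in auto)
    then show ?thesis by (simp only: atLeast0LessThan)
  qed
  also have "(\<Sum>l\<in>{N..<K}. M $$ (i,l) * X $$ (l,j)) = (\<Sum>l<K-N. M $$ (i,N+l) * X $$ (N+l,j))"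
    by (simp only: sum.atLeastLessThan_shift_0 atLeast0LessThan comp_def)
  also have "(\<Sum>l<N. M $$ (i,l) * X $$ (l,j)) = (col_block M 0 N * row_block X 0 N) $$ (i,j)"
    using assms ij by (subst mult_entry[of _ r N _ s]) (auto intro!: sum.cong carrier_matI)
  also have "(\<Sum>l<K-N. M $$ (i,N+l) * X $$ (N+l,j)) = (col_block M N K * row_block X N K) $$ (i,j)"
    using assms ij by (subst mult_entry[of _ r "K-N" _ s]) (auto intro!: sum.cong carrier_matI)
  finally show "(M * X) $$ (i,j) = (col_block M 0 N * row_block X 0 N + col_block M N K * row_block X N K) $$ (i,j)"
    using assms ij by simp
qed (use assms in auto)



definition nf :: "complex mat \<Rightarrow> real" where
  "nf X = (\<Sum>i<dim_row X. \<Sum>j<dim_col X. (cmod (X $$ (i,j)))\<^sup>2)"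
definition ip :: "complex mat \<Rightarrow> complex mat \<Rightarrow> complex" where
  "ip X Y = (\<Sum>i<dim_row X. \<Sum>j<dim_col X. cnj (X $$ (i,j)) * Y $$ (i,j))"

lemma frob_nf: "frob_norm X = sqrt (nf X)"
  by (simp add: frob_norm_def nf_def)

lemma nf_nonneg: "nf X \<ge> 0"
  unfolding nf_def by (intro sum_nonneg) auto

lemma cnj_mult_self: "cnj z * z = complex_of_real ((cmod z)\<^sup>2)"
  by (subst complex_norm_square) (rule mult.commute)

lemma ip_self: "ip X X = complex_of_real (nf X)"
  unfolding ip_def nf_def of_real_sum by (intro sum.cong refl) (rule cnj_mult_self)

lemma ip_mult:
  assumes M: "M \<in> carrier_mat a b" and Z: "Z \<in> carrier_mat b c" and D: "D \<in> carrier_mat a c"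
  shows "ip (M * Z) D = ip Z (ctrans M * D)"
proof -
  have "ip (M * Z) D = (\<Sum>i<a. \<Sum>j<c. \<Sum>l<b. cnj (M $$ (i,l)) * cnj (Z $$ (l,j)) * D $$ (i,j))"
    unfolding ip_def using assms
    by (auto simp: mult_entry[OF M Z] sum_distrib_right intro!: sum.cong)
  also have "\<dots> = (\<Sum>i<a. \<Sum>l<b. \<Sum>j<c. cnj (M $$ (i,l)) * cnj (Z $$ (l,j)) * D $$ (i,j))"
    by (intro sum.cong refl sum.swap)
  also have "\<dots> = (\<Sum>l<b. \<Sum>i<a. \<Sum>j<c. cnj (M $$ (i,l)) * cnj (Z $$ (l,j)) * D $$ (i,j))"
    by (rule sum.swap)
  also have "\<dots> = (\<Sum>l<b. \<Sum>j<c. \<Sum>i<a. cnj (M $$ (i,l)) * cnj (Z $$ (l,j)) * D $$ (i,j))"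
    by (intro sum.cong refl sum.swap)
  also have "\<dots> = ip Z (ctrans M * D)"
    unfolding ip_def using assms
    by (auto simp: mult_entry[of "ctrans M" b a D c] sum_distrib_left intro!: sum.cong)
  finally show ?thesis .
qed

lemma frob_iso:
  assumes U: "U \<in> carrier_mat a b" and UU: "ctrans U * U = 1\<^sub>m b" and X: "X \<in> carrier_mat b c"
  shows "frob_norm (U * X) = frob_norm X"
proof -
  have "ip (U * X) (U * X) = ip X (ctrans U * (U * X))"
    by (rule ip_mult[OF U X]) (use U X in auto)
  also have "ctrans U * (U * X) = (ctrans U * U) * X"
    using U X by (intro assoc_mult_mat[symmetric]) (auto intro!: carrier_matI)
  also have "\<dots> = X" using UU X by simp
  finally have "nf (U * X) = nf X" by (simp add: ip_self)
  then show ?thesis by (simp add: frob_nf)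
qed

lemma cmod_expand: "(cmod (d - complex_of_real s * k))\<^sup>2 = (cmod d)\<^sup>2 - 2 * s * Re (cnj k * d) + s\<^sup>2 * (cmod k)\<^sup>2"
  unfolding cmod_power2 by (simp add: power2_eq_square algebra_simps)

lemma sum2_lin:
  fixes f g h :: "nat \<Rightarrow> nat \<Rightarrow> real"
  shows "(\<Sum>i<a. \<Sum>j<c. f i j - 2 * s * g i j + s\<^sup>2 * h i j) = (\<Sum>i<a. \<Sum>j<c. f i j) - 2 * s * (\<Sum>i<a. \<Sum>j<c. g i j) + s\<^sup>2 * (\<Sum>i<a. \<Sum>j<c. h i j)"
  by (simp add: sum.distrib sum_subtractf sum_distrib_left)

lemma nf_expand:
  assumes D: "D \<in> carrier_mat a c" and K: "K \<in> carrier_mat a c"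
  shows "nf (D - complex_of_real s \<cdot>\<^sub>m K) = nf D - 2 * s * Re (ip K D) + s\<^sup>2 * nf K"
proof -
  have "nf (D - complex_of_real s \<cdot>\<^sub>m K) = (\<Sum>i<a. \<Sum>j<c. (cmod (D $$ (i,j)))\<^sup>2 - 2 * s * Re (cnj (K $$ (i,j)) * D $$ (i,j)) + s\<^sup>2 * (cmod (K $$ (i,j)))\<^sup>2)"
    unfolding nf_def using assms by (auto simp: cmod_expand intro!: sum.cong)
  also have "\<dots> = (\<Sum>i<a. \<Sum>j<c. (cmod (D $$ (i,j)))\<^sup>2) - 2 * s * (\<Sum>i<a. \<Sum>j<c. Re (cnj (K $$ (i,j)) * D $$ (i,j))) + s\<^sup>2 * (\<Sum>i<a. \<Sum>j<c. (cmod (K $$ (i,j)))\<^sup>2)"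
    by (rule sum2_lin)
  also have "\<dots> = nf D - 2 * s * Re (ip K D) + s\<^sup>2 * nf K"
  proof -
    have dims: "dim_row D = a" "dim_col D = c" "dim_row K = a" "dim_col K = c" using D K by auto
    show ?thesis unfolding nf_def ip_def Re_sum dims by (rule refl)
  qed
  finally show ?thesis .
qed

lemma nf_zero:
  assumes X: "X \<in> carrier_mat a c" and "nf X = 0"
  shows "X = 0\<^sub>m a c"
proof (rule eq_matI)
  fix i j assume i: "i < dim_row (0\<^sub>m a c :: complex mat)" and j: "j < dim_col (0\<^sub>m a c :: complex mat)"
  have "\<forall>i\<in>{..<a}. (\<Sum>j<c. (cmod (X $$ (i,j)))\<^sup>2) = 0"
    using assms by (subst sum_nonneg_eq_0_iff[symmetric]) (auto simp: nf_def intro: sum_nonneg)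
  then have "\<forall>i\<in>{..<a}. \<forall>j\<in>{..<c}. (cmod (X $$ (i,j)))\<^sup>2 = 0"
    by (subst (asm) sum_nonneg_eq_0_iff) auto
  then show "X $$ (i,j) = 0\<^sub>m a c $$ (i,j)" using i j by auto
qed (use X in auto)



lemma least_sq:
  assumes M: "M \<in> carrier_mat a b" and Y: "Y \<in> carrier_mat b c" and G: "G \<in> carrier_mat a c"
    and min: "\<forall>Z \<in> carrier_mat b c. frob_norm (M * Y - G) \<le> frob_norm (M * Z - G)"
  shows "ctrans M * (M * Y - G) = 0\<^sub>m b c"
proof -
  define D where "D = M * Y - G"
  define W where "W = ctrans M * D"
  define K where "K = M * W"
  have D: "D \<in> carrier_mat a c" using M Y G by (auto simp: D_def)
  have W: "W \<in> carrier_mat b c" unfolding W_def by (rule mult_carrier_mat[OF ctrans_carrier[OF M] D])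
  have K: "K \<in> carrier_mat a c" using M W by (auto simp: K_def)
  have ipKD: "ip K D = complex_of_real (nf W)"
    unfolding K_def using ip_mult[OF M W D] by (simp add: W_def[symmetric] ip_self)
  have ineq: "2 * s * nf W \<le> s\<^sup>2 * nf K" if "s > 0" for s :: real
  proof -
    let ?Z = "Y - complex_of_real s \<cdot>\<^sub>m W"
    have Zc: "?Z \<in> carrier_mat b c" using Y W by auto
    have "M * ?Z = M * Y - M * (complex_of_real s \<cdot>\<^sub>m W)"
      using M Y W by (intro mult_minus_distrib_mat) auto
    also have "M * (complex_of_real s \<cdot>\<^sub>m W) = complex_of_real s \<cdot>\<^sub>m K"
      unfolding K_def using M W by (rule mult_smult_distrib)
    finally have "M * ?Z - G = D - complex_of_real s \<cdot>\<^sub>m K"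
      using M Y G K by (auto simp: D_def intro!: eq_matI)
    then have "frob_norm D \<le> frob_norm (D - complex_of_real s \<cdot>\<^sub>m K)"
      using min Zc by (metis D_def)
    then have "nf D \<le> nf (D - complex_of_real s \<cdot>\<^sub>m K)"
      by (simp add: frob_nf)
    also have "\<dots> = nf D - 2 * s * nf W + s\<^sup>2 * nf K"
      using nf_expand[OF D K] ipKD by simp
    finally show ?thesis by simp
  qed
  have "nf W = 0"
  proof (rule ccontr)
    assume "nf W \<noteq> 0"
    then have w: "nf W > 0" using nf_nonneg[of W] by simp
    have k: "nf K \<ge> 0" by (rule nf_nonneg)
    define s where "s = nf W / (nf K + 1)"
    have s: "s > 0" using w k by (simp add: s_def)
    have "2 * s * nf W \<le> s\<^sup>2 * nf K" using ineq[OF s] .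
    then have "2 * nf W \<le> s * nf K" using s by (simp add: power2_eq_square)
    also have "s * nf K < nf W" using w k
      by (simp add: s_def field_simps)
    finally show False using w by simp
  qed
  then show ?thesis using nf_zero[OF W] by (simp add: W_def D_def)
qed

lemma orth_ctrans_zero:
  assumes Q: "Q \<in> carrier_mat a k" and M: "M \<in> carrier_mat a b"
    and rg: "range_mat Q = orth_compl a (range_mat M)"
  shows "ctrans Q * M = 0\<^sub>m k b"
proof (rule eq_matI)
  fix i l assume i: "i < dim_row (0\<^sub>m k b :: complex mat)" and l: "l < dim_col (0\<^sub>m k b :: complex mat)"
  have ik: "i < k" and lb: "l < b" using i l by auto
  have "Q *\<^sub>v unit_vec k i \<in> range_mat Q"
    unfolding range_mat_def using Q ik by auto
  then have qo: "Q *\<^sub>v unit_vec k i \<in> orth_compl a (range_mat M)" using rg by simp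
  have "M *\<^sub>v unit_vec b l \<in> range_mat M"
    unfolding range_mat_def using M lb by auto
  with qo have "(\<Sum>r<a. cnj ((M *\<^sub>v unit_vec b l) $ r) * (Q *\<^sub>v unit_vec k i) $ r) = 0"
    unfolding orth_compl_def by auto
  then have "(\<Sum>r<a. cnj (M $$ (r,l)) * Q $$ (r,i)) = 0"
    using Q M ik lb by simp
  then have "cnj (\<Sum>r<a. cnj (M $$ (r,l)) * Q $$ (r,i)) = 0" by simp
  then have "(\<Sum>r<a. cnj (Q $$ (r,i)) * M $$ (r,l)) = 0" by (simp add: mult.commute)
  then show "(ctrans Q * M) $$ (i,l) = 0\<^sub>m k b $$ (i,l)"
    using Q M ik lb by (subst mult_entry[of _ k a _ b]) (auto intro!: carrier_matI)
qed (use Q M in auto)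

lemma col_in_orth:
  assumes M: "M \<in> carrier_mat a b" and D: "D \<in> carrier_mat a c"
    and z: "ctrans M * D = 0\<^sub>m b c" and j: "j < c"
  shows "col D j \<in> orth_compl a (range_mat M)"
  unfolding orth_compl_def
proof (safe)
  show "col D j \<in> carrier_vec a" using D by auto
next
  fix y assume "y \<in> range_mat M"
  then obtain v where v: "v \<in> carrier_vec b" and y: "y = M *\<^sub>v v"
    unfolding range_mat_def using M by auto
  have "(\<Sum>r<a. cnj (y $ r) * col D j $ r) = (\<Sum>r<a. \<Sum>l<b. cnj (M $$ (r,l)) * cnj (v $ l) * D $$ (r,j))"
    using M D v j by (auto simp: y scalar_prod_def sum_distrib_right lessThan_atLeast0 intro!: sum.cong)
  also have "\<dots> = (\<Sum>l<b. \<Sum>r<a. cnj (M $$ (r,l)) * cnj (v $ l) * D $$ (r,j))"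
    by (rule sum.swap)
  also have "\<dots> = (\<Sum>l<b. cnj (v $ l) * (ctrans M * D) $$ (l,j))"
    using M D v j by (auto simp: mult_entry[of _ b a _ c] sum_distrib_left intro!: sum.cong)
  also have "\<dots> = 0" using z j by simp
  finally show "(\<Sum>r<a. cnj (y $ r) * col D j $ r) = 0" .
qed

lemma decomp_range:
  assumes Q: "Q \<in> carrier_mat a k" and D: "D \<in> carrier_mat a c"
    and cols: "\<forall>j<c. col D j \<in> range_mat Q"
  shows "\<exists>X \<in> carrier_mat k c. Q * X = D"
proof -
  have "\<forall>j. \<exists>x. j < c \<longrightarrow> x \<in> carrier_vec k \<and> Q *\<^sub>v x = col D j"
  proof
    fix j show "\<exists>x. j < c \<longrightarrow> x \<in> carrier_vec k \<and> Q *\<^sub>v x = col D j"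
    proof (cases "j < c")
      case True
      then have "col D j \<in> range_mat Q" using cols by simp
      then obtain x where "x \<in> carrier_vec (dim_col Q)" "col D j = Q *\<^sub>v x"
        unfolding range_mat_def by blast
      then show ?thesis using Q by auto
    next
      case False then show ?thesis by auto
    qed
  qed
  then obtain f where f: "\<And>j. j < c \<Longrightarrow> f j \<in> carrier_vec k \<and> Q *\<^sub>v f j = col D j"
    by metis
  define X where "X = mat k c (\<lambda>(i,j). f j $ i)"
  have X: "X \<in> carrier_mat k c" by (simp add: X_def)
  have "Q * X = D"
  proof (rule eq_matI)
    fix r j assume r: "r < dim_row D" and j: "j < dim_col D"
    have rj: "r < a" "j < c" using r j D by auto
    have "(Q * X) $$ (r,j) = (\<Sum>l<k. Q $$ (r,l) * f j $ l)"
      using Q X rj by (subst mult_entry[of _ a k _ c]) (auto simp: X_def)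
    also have "\<dots> = (Q *\<^sub>v f j) $ r"
    proof -
      have fc: "f j \<in> carrier_vec k" using f[OF rj(2)] by simp
      show ?thesis using Q fc rj by (auto simp: scalar_prod_def lessThan_atLeast0 intro!: sum.cong)
    qed
    also have "\<dots> = D $$ (r,j)" using f[OF rj(2)] rj D by auto
    finally show "(Q * X) $$ (r,j) = D $$ (r,j)" .
  qed (use Q X D in auto)
  with X show ?thesis by blast
qed

lemma nf_uminus: "nf (- X) = nf X"
  by (simp add: nf_def)


lemma nf_split:
  assumes X: "X \<in> carrier_mat a c" and Na: "N \<le> a"
    and z: "\<And>i j. i < N \<Longrightarrow> j < c \<Longrightarrow> X $$ (i,j) = 0"
  shows "nf X = nf (row_block X N a)"
proof -
  let ?f = "\<lambda>i. \<Sum>j<c. (cmod (X $$ (i,j)))\<^sup>2"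
  have "nf X = (\<Sum>i\<in>{0..<a}. ?f i)" using X by (simp add: nf_def atLeast0LessThan)
  also have "\<dots> = (\<Sum>i\<in>{0..<N}. ?f i) + (\<Sum>i\<in>{N..<a}. ?f i)"
    by (rule sum.atLeastLessThan_concat[symmetric]) (use Na in auto)
  also have "(\<Sum>i\<in>{0..<N}. ?f i) = 0" using z by simp
  also have "(\<Sum>i\<in>{N..<a}. ?f i) = (\<Sum>i\<in>{0..<a-N}. ?f (N+i))"
    by (simp only: sum.atLeastLessThan_shift_0[of _ N a] comp_def)
  also have "\<dots> = nf (row_block X N a)"
    using X Na by (simp add: nf_def atLeast0LessThan)
  finally show ?thesis by simp
qed



theorem corollary3p2:
  fixes A B :: "real mat" and V :: "nat \<Rightarrow> real mat"
    and n q mjm1 mj :: nat and p :: complex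
    and Ups Y :: "complex mat"
  defines "Tu \<equiv> \<lambda>m. transpose_mat (V (m+1)) * A * V m"
      and "T \<equiv> \<lambda>m. transpose_mat (V m) * A * V m"
      and "R \<equiv> \<lambda>Z. (cmat A + p \<cdot>\<^sub>m 1\<^sub>m n) * (cmat (V mj) * Z) - cmat (V mjm1) * Ups"
  assumes A: "A \<in> carrier_mat n n" and stab: "asympt_stable A"
    and B: "B \<in> carrier_mat n q"
    and Vdim: "\<And>m. 1 \<le> m \<Longrightarrow> m \<le> mj + 1 \<Longrightarrow> V m \<in> carrier_mat n (2*m*q)"
    and Vorth: "\<And>m. 1 \<le> m \<Longrightarrow> m \<le> mj + 1 \<Longrightarrow> transpose_mat (V m) * V m = 1\<^sub>m (2*m*q)"
    and Vspan: "\<And>m. 1 \<le> m \<Longrightarrow> m \<le> mj + 1 \<Longrightarrow> range_mat (V m) = ext_krylov A B m"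
    and Vnest: "\<And>m. 1 \<le> m \<Longrightarrow> m \<le> mj \<Longrightarrow> V m = col_block (V (m+1)) 0 (2*m*q)"
    and arnoldi: "\<And>m. 1 \<le> m \<Longrightarrow> m \<le> mj \<Longrightarrow>
        A * V m = V m * T m
          + col_block (V (m+1)) (2*m*q) (2*(m+1)*q) * row_block (Tu m) (2*m*q) (2*(m+1)*q)"
    and p: "Re p < 0"
    and m: "1 \<le> mjm1" "mjm1 \<le> mj"
    and Ups: "Ups \<in> carrier_mat (2*mjm1*q) q"
    and Y: "Y \<in> carrier_mat (2*mj*q) q"
  shows "(ctrans (cmat (V mj)) * R Y = 0\<^sub>m (2*mj*q) q \<longrightarrow>
            (cmat (T mj) + p \<cdot>\<^sub>m 1\<^sub>m (2*mj*q)) * Y = pad_rows Ups (2*mj*q)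
          \<and> frob_norm (R Y) = frob_norm (cmat (row_block (Tu mj) (2*mj*q) (2*(mj+1)*q)) * Y))
       \<and> ((\<forall>Z \<in> carrier_mat (2*mj*q) q. frob_norm (R Y) \<le> frob_norm (R Z)) \<longrightarrow>
            (let M = cmat (Tu mj) + p \<cdot>\<^sub>m pad_rows (1\<^sub>m (2*mj*q)) (2*(mj+1)*q);
                 G = pad_rows Ups (2*(mj+1)*q)
             in (\<forall>Z \<in> carrier_mat (2*mj*q) q. frob_norm (M * Y - G) \<le> frob_norm (M * Z - G))
              \<and> (\<forall>Q2 k. Q2 \<in> carrier_mat (2*(mj+1)*q) k \<longrightarrow> ctrans Q2 * Q2 = 1\<^sub>m k \<longrightarrow>
                   range_mat Q2 = orth_compl (2*(mj+1)*q) (range_mat M) \<longrightarrow>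
                   frob_norm (R Y) = frob_norm (ctrans Q2 * G))))"
  proof -
  define N where "N = 2*mj*q"
  define N1 where "N1 = 2*(mj+1)*q"
  define N0 where "N0 = 2*mjm1*q"
  have mj1: "1 \<le> mj" using m by simp
  have NN1: "N \<le> N1" and N0N: "N0 \<le> N" using m by (auto simp: N_def N1_def N0_def)
  have N1N: "N1 - N = 2*q" by (simp add: N_def N1_def algebra_simps)
  have W: "(V mj) \<in> carrier_mat n N" using Vdim[of mj] mj1 by (simp add: N_def)
  have W1: "(V (mj+1)) \<in> carrier_mat n N1" using Vdim[of "mj+1"] by (simp add: N1_def)
  have W0: "(V mjm1) \<in> carrier_mat n N0" using Vdim[of mjm1] m by (simp add: N0_def)
  have nest: "\<And>d. mjm1 + d \<le> mj \<Longrightarrow> (V mjm1) = col_block (V (mjm1+d+1)) 0 N0"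
  proof -
    fix d show "mjm1 + d \<le> mj \<Longrightarrow> (V mjm1) = col_block (V (mjm1+d+1)) 0 N0"
    proof (induction d)
      case 0 then show ?case using Vnest[of mjm1] m by (simp add: N0_def)
    next
      case (Suc d)
      then have "(V mjm1) = col_block (V (mjm1+d+1)) 0 N0" by simp
      also have "V (mjm1+d+1) = col_block (V (mjm1+d+1+1)) 0 (2*(mjm1+d+1)*q)"
        using Vnest[of "mjm1+d+1"] Suc.prems by simp
      also have "col_block (col_block (V (mjm1+d+1+1)) 0 (2*(mjm1+d+1)*q)) 0 N0 = col_block (V (mjm1+d+1+1)) 0 N0"
        by (rule col_block_col_block) (unfold N0_def, rule mult_le_mono1, simp)
      finally show ?case by simp
    qed
  qed
  have hW0: "(V mjm1) = col_block (V (mj+1)) 0 N0" using nest[of "mj - mjm1"] m by simp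
  have hW: "(V mj) = col_block (V (mj+1)) 0 N" using Vnest[of mj] mj1 by (simp add: N_def)
  have Tu: "Tu mj \<in> carrier_mat N1 N" using W W1 A by (simp add: Tu_def)
  have T: "T mj \<in> carrier_mat N N" using W A by (simp add: T_def)
  have trW: "transpose_mat (V mj) = row_block (transpose_mat (V (mj+1))) 0 N"
    using hW W1 NN1 by (simp add: transpose_col_block)
  have W1tr: "transpose_mat (V (mj+1)) \<in> carrier_mat N1 n" using W1 by simp
  have hTtop: "row_block (Tu mj) 0 N = T mj"
  proof -
    have "row_block (Tu mj) 0 N = row_block (transpose_mat (V (mj+1)) * A) 0 N * (V mj)"
      unfolding Tu_def using W1tr A W NN1 by (intro row_block_mult[of _ N1 n]) auto
    also have "row_block (transpose_mat (V (mj+1)) * A) 0 N = row_block (transpose_mat (V (mj+1))) 0 N * A"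
      using W1tr A NN1 by (intro row_block_mult[of _ N1 n]) auto
    finally show ?thesis using trW by (simp add: T_def)
  qed
  have hAW: "A * (V mj) = (V (mj+1)) * Tu mj"
  proof -
    have "(V (mj+1)) * Tu mj = col_block (V (mj+1)) 0 N * row_block (Tu mj) 0 N + col_block (V (mj+1)) N N1 * row_block (Tu mj) N N1"
      by (rule block_decomp[OF W1 Tu NN1])
    also have "\<dots> = A * (V mj)" using arnoldi[of mj] mj1 hW hTtop by (simp add: N_def N1_def)
    finally show ?thesis by simp
  qed
  have hWW1: "transpose_mat (V mj) * (V (mj+1)) = row_block (1\<^sub>m N1) 0 N"
  proof -
    have "transpose_mat (V mj) * (V (mj+1)) = row_block (transpose_mat (V (mj+1)) * (V (mj+1))) 0 N"
      using trW W1tr W1 NN1 by (simp add: row_block_mult[of _ N1 n])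
    also have "transpose_mat (V (mj+1)) * (V (mj+1)) = 1\<^sub>m N1" using Vorth[of "mj+1"] by (simp add: N1_def)
    finally show ?thesis .
  qed
  define CA where "CA = cmat A"
  define CW where "CW = cmat (V mj)"
  define CW1 where "CW1 = cmat (V (mj+1))"
  define CW0 where "CW0 = cmat (V mjm1)"
  define CTu where "CTu = cmat (Tu mj)"
  define P where "P = (pad_rows (1\<^sub>m N) N1 :: complex mat)"
  define M where "M = CTu + p \<cdot>\<^sub>m P"
  define G where "G = pad_rows Ups N1"
  have CA: "CA \<in> carrier_mat n n" using A by (simp add: CA_def)
  have CW: "CW \<in> carrier_mat n N" using W by (simp add: CW_def)
  have CW1: "CW1 \<in> carrier_mat n N1" using W1 by (simp add: CW1_def)
  have CTu: "CTu \<in> carrier_mat N1 N" using Tu by (simp add: CTu_def)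
  have P: "P \<in> carrier_mat N1 N" unfolding P_def by (rule pad_rows_carrier_mat[OF one_carrier_mat])
  have Mc: "M \<in> carrier_mat N1 N" using CTu P by (simp add: M_def)
  have G: "G \<in> carrier_mat N1 q" unfolding G_def by (rule pad_rows_carrier_mat[OF Ups])
  have CWP: "CW = CW1 * P"
  proof -
    have "CW = col_block CW1 0 N" using hW W1 NN1 by (simp add: CW_def CW1_def cmat_col_block)
    also have "\<dots> = col_block CW1 0 N * 1\<^sub>m N"
      by (rule right_mult_one_mat[symmetric, OF col_block_carrier0[OF CW1]])
    also have "\<dots> = CW1 * P" unfolding P_def
      by (rule col_block_pad[OF CW1 one_carrier_mat NN1])
    finally show ?thesis .
  qed
  have CW0G: "CW0 * Ups = CW1 * G"
  proof -
    have "CW0 = col_block CW1 0 N0" using hW0 W1 NN1 N0N by (simp add: CW0_def CW1_def cmat_col_block)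
    moreover have Ups0: "Ups \<in> carrier_mat N0 q" using Ups by (simp add: N0_def)
    moreover have "N0 \<le> N1" using N0N NN1 by simp
    ultimately show ?thesis unfolding G_def using col_block_pad[OF CW1 Ups0] by simp
  qed
  have CAW: "CA * CW = CW1 * CTu"
    unfolding CA_def CW_def CW1_def CTu_def
    using cmat_mult[OF A W] cmat_mult[OF W1 Tu] hAW by simp
  have UU: "ctrans CW1 * CW1 = 1\<^sub>m N1"
    unfolding CW1_def ctrans_cmat
    using cmat_mult[OF W1tr W1] Vorth[of "mj+1"] by (simp add: N1_def cmat_one)
  have hR: "R Z = CW1 * (M * Z - G)" if Z: "Z \<in> carrier_mat N q" for Z
  proof -
    have PZ: "P * Z \<in> carrier_mat N1 q" using P Z by simp
    have CTuZ: "CTu * Z \<in> carrier_mat N1 q" using CTu Z by simp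
    have "R Z = (CA + p \<cdot>\<^sub>m 1\<^sub>m n) * (CW * Z) - CW0 * Ups"
      by (simp add: R_def CA_def CW_def CW0_def N_def)
    also have "(CA + p \<cdot>\<^sub>m 1\<^sub>m n) * (CW * Z) = CA * (CW * Z) + (p \<cdot>\<^sub>m 1\<^sub>m n) * (CW * Z)"
      using CA CW Z by (intro add_mult_distrib_mat[of _ n n]) auto
    also have "(p \<cdot>\<^sub>m 1\<^sub>m n) * (CW * Z) = p \<cdot>\<^sub>m (CW * Z)"
      using CW Z by (subst mult_smult_assoc_mat[of _ n n _ q]) auto
    also have "CA * (CW * Z) = (CA * CW) * Z"
      using CA CW Z by (intro assoc_mult_mat[symmetric]) auto
    also have "\<dots> = CW1 * (CTu * Z)"
      unfolding CAW using CW1 CTu Z by (intro assoc_mult_mat) auto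
    also have "CW * Z = CW1 * (P * Z)"
      unfolding CWP using CW1 P Z by (intro assoc_mult_mat) auto
    also have "p \<cdot>\<^sub>m (CW1 * (P * Z)) = CW1 * (p \<cdot>\<^sub>m (P * Z))"
      using CW1 PZ by (intro mult_smult_distrib[symmetric])
    also have "CW1 * (CTu * Z) + CW1 * (p \<cdot>\<^sub>m (P * Z)) = CW1 * (CTu * Z + p \<cdot>\<^sub>m (P * Z))"
      using CW1 CTuZ PZ by (intro mult_add_distrib_mat[symmetric]) auto
    also have "CTu * Z + p \<cdot>\<^sub>m (P * Z) = M * Z"
    proof -
      have "M * Z = CTu * Z + (p \<cdot>\<^sub>m P) * Z" unfolding M_def
        using CTu P Z by (intro add_mult_distrib_mat) auto
      also have "(p \<cdot>\<^sub>m P) * Z = p \<cdot>\<^sub>m (P * Z)" using P Z by (intro mult_smult_assoc_mat) auto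
      finally show ?thesis by simp
    qed
    also have "CW1 * (M * Z) - CW0 * Ups = CW1 * (M * Z - G)"
      unfolding CW0G using CW1 Mc Z G by (intro mult_minus_distrib_mat[symmetric]) auto
    finally show ?thesis .
  qed
  have hF: "frob_norm (R Z) = frob_norm (M * Z - G)" if Z: "Z \<in> carrier_mat N q" for Z
    unfolding hR[OF Z] by (rule frob_iso[OF CW1 UU minus_carrier_mat[OF G]])
  define D where "D = M * Y - G"
  have Yc: "Y \<in> carrier_mat N q" using Y by (simp add: N_def)
  have D: "D \<in> carrier_mat N1 q" unfolding D_def by (rule minus_carrier_mat[OF G])
  have RY: "R Y = CW1 * D" using hR[OF Yc] by (simp add: D_def)
  have FRY: "frob_norm (R Y) = frob_norm D" using hF[OF Yc] by (simp add: D_def)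
  have part1: "ctrans (cmat (V mj)) * R Y = 0\<^sub>m (2*mj*q) q \<longrightarrow>
            (cmat (T mj) + p \<cdot>\<^sub>m 1\<^sub>m (2*mj*q)) * Y = pad_rows Ups (2*mj*q)
          \<and> frob_norm (R Y) = frob_norm (cmat (row_block (Tu mj) (2*mj*q) (2*(mj+1)*q)) * Y)"
  proof
    assume gal: "ctrans (cmat (V mj)) * R Y = 0\<^sub>m (2*mj*q) q"
    have "ctrans (cmat (V mj)) * R Y = (ctrans CW * CW1) * D"
      unfolding RY CW_def[symmetric] using CW CW1 D by (intro assoc_mult_mat[symmetric]) auto
    also have "ctrans CW * CW1 = row_block (1\<^sub>m N1) 0 N"
      unfolding CW_def CW1_def ctrans_cmat
      using cmat_mult[of "transpose_mat (V mj)" N n "V (mj+1)" N1] W W1 hWW1 NN1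
      by (simp add: cmat_row_block cmat_one)
    also have "row_block (1\<^sub>m N1) 0 N * D = row_block (1\<^sub>m N1 * D) 0 N"
      using D NN1 by (intro row_block_mult[symmetric, of _ N1 N1]) auto
    also have "1\<^sub>m N1 * D = D" using D by simp
    finally have topz: "row_block D 0 N = 0\<^sub>m N q" using gal by (simp add: N_def)
    have Dz: "D $$ (i,j) = 0" if "i < N" "j < q" for i j
    proof -
      have "row_block D 0 N $$ (i,j) = 0" using topz that by simp
      then show ?thesis using that D by simp
    qed
    have Mtop: "row_block M 0 N = cmat (T mj) + p \<cdot>\<^sub>m 1\<^sub>m N"
      unfolding hTtop[symmetric] using Mc CTu P Tu NN1
      by (auto simp: M_def CTu_def P_def intro!: eq_matI)
    have "(cmat (T mj) + p \<cdot>\<^sub>m 1\<^sub>m N) * Y = row_block (M * Y) 0 N"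
      unfolding Mtop[symmetric] using Mc Yc NN1 by (intro row_block_mult[symmetric]) auto
    also have "\<dots> = pad_rows Ups N"
    proof (rule eq_matI)
      fix i j assume i: "i < dim_row (pad_rows Ups N)" and j: "j < dim_col (pad_rows Ups N)"
      have ij: "i < N" "j < q" using i j Ups by auto
      have "D $$ (i,j) = (M * Y) $$ (i,j) - G $$ (i,j)" unfolding D_def using ij Mc Yc G NN1 by simp
      then show "row_block (M * Y) 0 N $$ (i,j) = pad_rows Ups N $$ (i,j)"
        using Dz[OF ij] ij Mc Yc Ups NN1 by (simp add: G_def)
    qed (use Mc Yc Ups in auto)
    finally have g1: "(cmat (T mj) + p \<cdot>\<^sub>m 1\<^sub>m (2*mj*q)) * Y = pad_rows Ups (2*mj*q)"
      by (simp add: N_def)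
    have Mbot: "row_block M N N1 = cmat (row_block (Tu mj) N N1)"
      using Mc CTu P Tu NN1
      by (auto simp: M_def CTu_def P_def intro!: eq_matI)
    have "row_block D N N1 = row_block (M * Y) N N1"
    proof (rule eq_matI)
      fix i j assume i: "i < dim_row (row_block (M * Y) N N1)" and j: "j < dim_col (row_block (M * Y) N N1)"
      have ij: "i < N1 - N" "j < q" using i j Yc by auto
      show "row_block D N N1 $$ (i,j) = row_block (M * Y) N N1 $$ (i,j)"
        using ij D Mc Yc G N0N Ups by (simp add: D_def G_def N0_def)
    qed (use D Mc Yc in auto)
    also have "\<dots> = cmat (row_block (Tu mj) N N1) * Y"
      unfolding Mbot[symmetric] using Mc Yc by (intro row_block_mult) auto
    finally have Dbot: "row_block D N N1 = cmat (row_block (Tu mj) N N1) * Y" .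
    have "frob_norm (R Y) = frob_norm D" by (rule FRY)
    also have "\<dots> = frob_norm (row_block D N N1)"
      unfolding frob_nf using nf_split[OF D NN1] Dz by simp
    finally have "frob_norm (R Y) = frob_norm (row_block D N N1)" .
    then have g2: "frob_norm (R Y) = frob_norm (cmat (row_block (Tu mj) (2*mj*q) (2*(mj+1)*q)) * Y)"
      unfolding Dbot by (simp add: N_def N1_def)
    show "(cmat (T mj) + p \<cdot>\<^sub>m 1\<^sub>m (2*mj*q)) * Y = pad_rows Ups (2*mj*q)
          \<and> frob_norm (R Y) = frob_norm (cmat (row_block (Tu mj) (2*mj*q) (2*(mj+1)*q)) * Y)"
      using g1 g2 by simp
  qed
  have part2: "(\<forall>Z \<in> carrier_mat (2*mj*q) q. frob_norm (R Y) \<le> frob_norm (R Z)) \<longrightarrow>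
      (\<forall>Z \<in> carrier_mat (2*mj*q) q. frob_norm (M * Y - G) \<le> frob_norm (M * Z - G))
     \<and> (\<forall>Q2 k. Q2 \<in> carrier_mat (2*(mj+1)*q) k \<longrightarrow> ctrans Q2 * Q2 = 1\<^sub>m k \<longrightarrow>
          range_mat Q2 = orth_compl (2*(mj+1)*q) (range_mat M) \<longrightarrow>
          frob_norm (R Y) = frob_norm (ctrans Q2 * G))"
  proof
    assume mn: "\<forall>Z \<in> carrier_mat (2*mj*q) q. frob_norm (R Y) \<le> frob_norm (R Z)"
    have mn2: "\<forall>Z \<in> carrier_mat N q. frob_norm (M * Y - G) \<le> frob_norm (M * Z - G)"
      using mn hF Yc by (simp add: N_def)
    have LS: "ctrans M * D = 0\<^sub>m N q" unfolding D_def by (rule least_sq[OF Mc Yc G mn2])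
    have "frob_norm (R Y) = frob_norm (ctrans Q2 * G)"
      if Q2: "Q2 \<in> carrier_mat N1 k" and QQ: "ctrans Q2 * Q2 = 1\<^sub>m k"
        and rg: "range_mat Q2 = orth_compl N1 (range_mat M)" for Q2 k
    proof -
      have QM: "ctrans Q2 * M = 0\<^sub>m k N" by (rule orth_ctrans_zero[OF Q2 Mc rg])
      have "\<forall>j<q. col D j \<in> range_mat Q2" using col_in_orth[OF Mc D LS] rg by simp
      then obtain X where X: "X \<in> carrier_mat k q" and QX: "Q2 * X = D"
        using decomp_range[OF Q2 D] by blast
      have "ctrans Q2 * D = ctrans Q2 * (Q2 * X)" using QX by simp
      also have "\<dots> = (ctrans Q2 * Q2) * X"
        by (rule assoc_mult_mat[symmetric, OF ctrans_carrier[OF Q2] Q2 X])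
      also have "\<dots> = X" using QQ X by simp
      finally have "X = ctrans Q2 * D" by simp
      also have "ctrans Q2 * D = ctrans Q2 * (M * Y) - ctrans Q2 * G"
        unfolding D_def by (rule mult_minus_distrib_mat[OF ctrans_carrier[OF Q2] mult_carrier_mat[OF Mc Yc] G])
      also have "ctrans Q2 * (M * Y) = (ctrans Q2 * M) * Y"
        by (rule assoc_mult_mat[symmetric, OF ctrans_carrier[OF Q2] Mc Yc])
      also have "\<dots> = 0\<^sub>m k q" unfolding QM using Yc by simp
      finally have "X = 0\<^sub>m k q - ctrans Q2 * G" .
      then have "ctrans Q2 * G = - X" using X Q2 G by (auto intro!: eq_matI)
      then have "frob_norm (ctrans Q2 * G) = frob_norm X" by (simp add: frob_nf nf_uminus)
      also have "frob_norm X = frob_norm D" using frob_iso[OF Q2 QQ X] QX by simp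
      finally show ?thesis using FRY by simp
    qed
    then show "(\<forall>Z \<in> carrier_mat (2*mj*q) q. frob_norm (M * Y - G) \<le> frob_norm (M * Z - G))
     \<and> (\<forall>Q2 k. Q2 \<in> carrier_mat (2*(mj+1)*q) k \<longrightarrow> ctrans Q2 * Q2 = 1\<^sub>m k \<longrightarrow>
          range_mat Q2 = orth_compl (2*(mj+1)*q) (range_mat M) \<longrightarrow>
          frob_norm (R Y) = frob_norm (ctrans Q2 * G))"
      using mn2 by (simp add: N_def N1_def)
  qed
  show ?thesis using part1 part2
    unfolding Let_def M_def G_def CTu_def P_def N_def N1_def by simp
qed

end
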